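(* Let $\alpha\in(0,1)$ be irrational, and let $$B_n=\Big|\prod_{t=1}^{q_n-1}\frac{s_{nt}}{2\sin(\pi t/q_n)}\Big|,\qquad M_n=\lfloor(q_n-1)/2\rfloor,\qquad \tau_n=\lfloor q_n^{1/2}\rfloor.$$ Then for sufficiently large $n$, $$\log(B_n)=-2\pi^2\frac{c_n}{q_n^2}\sum_{t=1}^{M_n-1}\frac{D_t(\alpha_n^-)}{\sin(\pi t/q_n)\sin(\pi(t+1)/q_n)}-2\sum_{t=1}^{\tau_n}\sum_{j=2}^{\tau_n}\frac1j\Big(\frac{c_n\xi_{nt}}{t}\Big)^j+O(\tau_n^{-1}).$$
   Context: Continued fraction notation: - $\alpha=[0;a_1,a_2,\ldots]$. - $q_0=0$, $q_1=1$, $q_{n+1}=a_nq_n+q_{n-1}$, and $p_0=1$, $p_1=0$, $p_{n+1}=a_np_n+p_{n-1}$. - $\Lambda_n=q_n\alpha-p_n$. - $\alpha_n^+=[a_n;a_{n+1},\ldots]$ and $\alpha_n^-=[0;a_{n-1},\ldots,a_1]=q_{n-1}/q_n$. - $c_n=1/(\alpha_n^++\alpha_n^-)$. Auxiliary quantities, for $t\in\{0,\ldots,q_n-1\}$: - $\xi_{nt}=\{tq_{n-1}/q_n\}-\frac12$; - $s_{nt}=2\sin\big(\pi[t/q_n-|\Lambda_n|\xi_{nt}]\big)$. $D_t(\beta)=\sum_{s=1}^t(\{\beta s\}-\frac12)$. The $O$-constant is independent of $n$. *)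

theory Defs
  imports Complex_Main
begin

text \<open>Continued fraction expansion alpha = [0; a_1, a_2, ...] via the Gauss map:
  r_0 = alpha, r_(k+1) = frac (1 / r_k), a_n = floor (1 / r_(n-1)) for n >= 1.
  Then 1 / r_(n-1) = [a_n; a_(n+1), ...].\<close>

fun cf_r :: "real \<Rightarrow> nat \<Rightarrow> real" where
  "cf_r \<alpha> 0 = \<alpha>"
| "cf_r \<alpha> (Suc k) = frac (1 / cf_r \<alpha> k)"

definition cf_a :: "real \<Rightarrow> nat \<Rightarrow> nat" where
  "cf_a \<alpha> n = nat \<lfloor>1 / cf_r \<alpha> (n - 1)\<rfloor>"

fun cf_q :: "real \<Rightarrow> nat \<Rightarrow> nat" where
  "cf_q \<alpha> 0 = 0"
| "cf_q \<alpha> (Suc 0) = 1"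
| "cf_q \<alpha> (Suc (Suc n)) = cf_a \<alpha> (Suc n) * cf_q \<alpha> (Suc n) + cf_q \<alpha> n"

fun cf_p :: "real \<Rightarrow> nat \<Rightarrow> nat" where
  "cf_p \<alpha> 0 = 1"
| "cf_p \<alpha> (Suc 0) = 0"
| "cf_p \<alpha> (Suc (Suc n)) = cf_a \<alpha> (Suc n) * cf_p \<alpha> (Suc n) + cf_p \<alpha> n"

definition Lambda :: "real \<Rightarrow> nat \<Rightarrow> real" where
  "Lambda \<alpha> n = real (cf_q \<alpha> n) * \<alpha> - real (cf_p \<alpha> n)"

definition alpha_plus :: "real \<Rightarrow> nat \<Rightarrow> real" where
  "alpha_plus \<alpha> n = 1 / cf_r \<alpha> (n - 1)"

text \<open>alpha_n^- = [0; a_(n-1), ..., a_1] = q_(n-1)/q_n.\<close>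
definition alpha_minus :: "real \<Rightarrow> nat \<Rightarrow> real" where
  "alpha_minus \<alpha> n = real (cf_q \<alpha> (n - 1)) / real (cf_q \<alpha> n)"

definition cn :: "real \<Rightarrow> nat \<Rightarrow> real" where
  "cn \<alpha> n = 1 / (alpha_plus \<alpha> n + alpha_minus \<alpha> n)"

definition xi :: "real \<Rightarrow> nat \<Rightarrow> nat \<Rightarrow> real" where
  "xi \<alpha> n t = frac (real t * real (cf_q \<alpha> (n - 1)) / real (cf_q \<alpha> n)) - 1 / 2"

definition snt :: "real \<Rightarrow> nat \<Rightarrow> nat \<Rightarrow> real" where
  "snt \<alpha> n t = 2 * sin (pi * (real t / real (cf_q \<alpha> n) - \<bar>Lambda \<alpha> n\<bar> * xi \<alpha> n t))"

definition Dt :: "nat \<Rightarrow> real \<Rightarrow> real" where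
  "Dt t \<beta> = (\<Sum>s = 1..t. frac (\<beta> * real s) - 1 / 2)"

definition Bn :: "real \<Rightarrow> nat \<Rightarrow> real" where
  "Bn \<alpha> n = \<bar>\<Prod>t = 1..cf_q \<alpha> n - 1. snt \<alpha> n t / (2 * sin (pi * real t / real (cf_q \<alpha> n)))\<bar>"

definition Mn :: "real \<Rightarrow> nat \<Rightarrow> nat" where
  "Mn \<alpha> n = (cf_q \<alpha> n - 1) div 2"

definition taun :: "real \<Rightarrow> nat \<Rightarrow> nat" where
  "taun \<alpha> n = nat \<lfloor>sqrt (real (cf_q \<alpha> n))\<rfloor>"

end

theory Submission
  imports Defs
begin


lemma cos_lower_nonneg:
  fixes x :: real assumes "0 \<le> x" shows "1 - x^2/2 \<le> cos x"
proof -
  let ?f = "\<lambda>x. cos x - 1 + x^2/2"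
  have "?f 0 \<le> ?f x"
  proof (rule DERIV_nonneg_imp_nondecreasing[OF assms])
    fix y :: real assume "0 \<le> y" "y \<le> x"
    show "\<exists>d. DERIV ?f y :> d \<and> d \<ge> 0"
      by (rule exI[of _ "- sin y + y"]) (auto intro!: derivative_eq_intros simp: sin_x_le_x \<open>0 \<le> y\<close>)
  qed
  then show ?thesis by simp
qed

lemma cos_lower: fixes x :: real shows "1 - x^2/2 \<le> cos x"
proof (cases "0 \<le> x")
  case True then show ?thesis by (rule cos_lower_nonneg)
next
  case False
  then have "1 - (-x)^2/2 \<le> cos (-x)" by (intro cos_lower_nonneg) auto
  then show ?thesis by simp
qed

lemma sin_lower_nonneg:
  fixes x :: real assumes "0 \<le> x" shows "x - x^3/6 \<le> sin x"
proof -
  let ?f = "\<lambda>x. sin x - x + x^3/6"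
  have "?f 0 \<le> ?f x"
  proof (rule DERIV_nonneg_imp_nondecreasing[OF assms])
    fix y :: real assume "0 \<le> y" "y \<le> x"
    show "\<exists>d. DERIV ?f y :> d \<and> d \<ge> 0"
      apply (rule exI[of _ "cos y - 1 + y^2/2"])
      using cos_lower[of y] by (auto intro!: derivative_eq_intros simp: power2_eq_square power3_eq_cube)
  qed
  then show ?thesis by simp
qed

lemma sin_minus_x_bound: fixes x :: real shows "\<bar>sin x - x\<bar> \<le> \<bar>x\<bar>^3/6"
proof (cases "0 \<le> x")
  case True then show ?thesis using sin_lower_nonneg[OF True] sin_x_le_x[OF True] by auto
next
  case False
  then have "0 \<le> -x" by auto
  from sin_lower_nonneg[OF this] sin_x_le_x[OF this] False show ?thesis
    by (auto simp: abs_if)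
qed

lemma x_cos_le_sin:
  fixes x :: real assumes "0 \<le> x" "x \<le> pi" shows "x * cos x \<le> sin x"
proof -
  let ?f = "\<lambda>x. sin x - x * cos x"
  have "?f 0 \<le> ?f x"
  proof (rule DERIV_nonneg_imp_nondecreasing[OF assms(1)])
    fix y :: real assume y: "0 \<le> y" "y \<le> x"
    have "0 \<le> sin y" using y assms by (intro sin_ge_zero) auto
    then show "\<exists>d. DERIV ?f y :> d \<and> d \<ge> 0"
      apply (rule_tac exI[of _ "y * sin y"])
      using y by (auto intro!: derivative_eq_intros simp: algebra_simps)
  qed
  then show ?thesis by simp
qed

lemma sin_ge_third:
  fixes x :: real assumes "0 \<le> x" "x \<le> 2" shows "x / 3 \<le> sin x"
proof -
  have "x^2 \<le> 4" using assms by (metis power_mono[of x 2 2] numeral_Bit0 one_add_one power2_eq_square real_sqrt_four real_sqrt_pow2 zero_le_numeral) 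
  then have "x^3 \<le> 4 * x" using assms by (simp add: power3_eq_cube power2_eq_square mult_right_mono)
  then show ?thesis using sin_lower_nonneg[OF assms(1)] by linarith
qed




context fixes \<alpha> :: real assumes a0: "0 < \<alpha>" and a1: "\<alpha> < 1" and airr: "\<alpha> \<notin> \<rat>"
begin

lemma cf_r_props: "cf_r \<alpha> k \<notin> \<rat> \<and> 0 < cf_r \<alpha> k \<and> cf_r \<alpha> k < 1"
proof (induction k)
  case 0 then show ?case using a0 a1 airr by simp
next
  case (Suc k)
  let ?r = "cf_r \<alpha> k"
  have i1: "1 / ?r \<notin> \<rat>"
  proof
    assume "1 / ?r \<in> \<rat>"
    moreover have "?r = 1 / (1/?r)" by simp
    ultimately have "?r \<in> \<rat>" by (metis Rats_1 Rats_divide)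
    then show False using Suc by simp
  qed
  have i2: "frac (1 / ?r) \<notin> \<rat>"
  proof
    assume "frac (1 / ?r) \<in> \<rat>"
    then have "frac (1 / ?r) + of_int \<lfloor>1 / ?r\<rfloor> \<in> \<rat>" by (intro Rats_add) auto
    then show False using i1 by (simp add: frac_def)
  qed
  have "frac (1 / ?r) \<noteq> 0" using i2 by (metis Rats_0)
  then have "0 < frac (1 / ?r)" using frac_ge_0 by (metis order_le_less)
  then show ?case using i2 frac_lt_1 by simp
qed

lemma cf_r_pos: "0 < cf_r \<alpha> k" using cf_r_props by blast
lemma cf_r_lt1: "cf_r \<alpha> k < 1" using cf_r_props by blast
lemma cf_inv_gt1: "1 < 1 / cf_r \<alpha> k"
  using cf_r_pos[of k] cf_r_lt1[of k] by (simp add: less_divide_eq)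

lemma cf_a_eq: "real (cf_a \<alpha> (Suc k)) = 1 / cf_r \<alpha> k - cf_r \<alpha> (Suc k)"
proof -
  have "1 < 1 / cf_r \<alpha> k" by (rule cf_inv_gt1)
  then have "0 \<le> \<lfloor>1 / cf_r \<alpha> k\<rfloor>" using cf_r_pos[of k] by simp
  then show ?thesis by (simp add: cf_a_def frac_def)
qed

lemma cf_a_ge1: "1 \<le> cf_a \<alpha> (Suc k)"
proof -
  have "1 < 1 / cf_r \<alpha> k" by (rule cf_inv_gt1)
  then have f: "1 \<le> \<lfloor>1 / cf_r \<alpha> k\<rfloor>" by (simp only: le_floor_iff)
  show ?thesis unfolding cf_a_def using nat_mono[OF f] by simp
qed

lemma cf_q_grow: "n \<le> cf_q \<alpha> (Suc n) \<and> n + 1 \<le> cf_q \<alpha> (Suc (Suc n)) \<and> 1 \<le> cf_q \<alpha> (Suc n)"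
proof (induction n)
  case 0 then show ?case using cf_a_ge1[of 0] by simp
next
  case (Suc n)
  have f1: "cf_q \<alpha> (Suc (Suc (Suc n))) = cf_a \<alpha> (Suc (Suc n)) * cf_q \<alpha> (Suc (Suc n)) + cf_q \<alpha> (Suc n)" by simp
  have f2: "cf_q \<alpha> (Suc (Suc n)) \<le> cf_a \<alpha> (Suc (Suc n)) * cf_q \<alpha> (Suc (Suc n))"
    using cf_a_ge1[of "Suc n"] by simp
  have f3: "n + 1 \<le> cf_q \<alpha> (Suc (Suc n))" and f4: "1 \<le> cf_q \<alpha> (Suc n)" using Suc by auto
  have "Suc n \<le> cf_q \<alpha> (Suc (Suc n))" using f3 by linarith
  moreover have "Suc n + 1 \<le> cf_q \<alpha> (Suc (Suc (Suc n)))" using f1 f2 f3 f4 by linarith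
  moreover have "1 \<le> cf_q \<alpha> (Suc (Suc n))" using f3 by linarith
  ultimately show ?case by blast
qed

lemma cf_q_ge: "n - 1 \<le> cf_q \<alpha> n"
  using cf_q_grow[of "n - 1"] by (cases n) auto

lemma cf_coprime: "coprime (cf_q \<alpha> n) (cf_q \<alpha> (Suc n))"
proof (induction n)
  case 0 then show ?case by simp
next
  case (Suc n)
  have "coprime (cf_q \<alpha> (Suc n)) (cf_a \<alpha> (Suc n) * cf_q \<alpha> (Suc n) + cf_q \<alpha> n)"
    using Suc by (simp add: coprime_iff_gcd_eq_1 gcd_add_mult gcd.commute)
  then show ?case by simp
qed

lemma cf_det: "real (cf_q \<alpha> (Suc n)) * real (cf_p \<alpha> n) - real (cf_p \<alpha> (Suc n)) * real (cf_q \<alpha> n) = (-1)^n"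
proof (induction n)
  case 0 then show ?case by simp
next
  case (Suc n)
  then show ?case by (simp add: algebra_simps)
qed

lemma cf_conv: "\<alpha> * (real (cf_q \<alpha> (Suc n)) + cf_r \<alpha> n * real (cf_q \<alpha> n))
   = real (cf_p \<alpha> (Suc n)) + cf_r \<alpha> n * real (cf_p \<alpha> n)"
proof (induction n)
  case 0 then show ?case by simp
next
  case (Suc n)
  let ?r = "cf_r \<alpha> n" and ?r' = "cf_r \<alpha> (Suc n)" and ?a = "real (cf_a \<alpha> (Suc n))"
  have ra: "?r * (?a + ?r') = 1" using cf_a_eq[of n] cf_r_pos[of n] by simp
  have rne: "?r \<noteq> 0" using cf_r_pos[of n] by simp
  have "?r * (\<alpha> * (real (cf_q \<alpha> (Suc (Suc n))) + ?r' * real (cf_q \<alpha> (Suc n))))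
      = \<alpha> * (real (cf_q \<alpha> (Suc n)) * (?r * (?a + ?r')) + ?r * real (cf_q \<alpha> n))"
    by (simp add: algebra_simps)
  also have "\<dots> = real (cf_p \<alpha> (Suc n)) * (?r * (?a + ?r')) + ?r * real (cf_p \<alpha> n)"
    using Suc ra by (simp add: algebra_simps)
  also have "\<dots> = ?r * (real (cf_p \<alpha> (Suc (Suc n))) + ?r' * real (cf_p \<alpha> (Suc n)))"
    by (simp add: algebra_simps)
  finally show ?case using rne by simp
qed

lemma cf_Lambda: "\<bar>Lambda \<alpha> (Suc n)\<bar> = cn \<alpha> (Suc n) / real (cf_q \<alpha> (Suc n))"
proof -
  let ?Q1 = "real (cf_q \<alpha> (Suc n))" and ?Q0 = "real (cf_q \<alpha> n)" and ?r = "cf_r \<alpha> n"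
  let ?P1 = "real (cf_p \<alpha> (Suc n))" and ?P0 = "real (cf_p \<alpha> n)"
  have Q1: "1 \<le> ?Q1" using cf_q_grow[of n] by simp
  have r: "0 < ?r" by (rule cf_r_pos)
  have den: "0 < ?Q1 + ?r * ?Q0" using Q1 r by (simp add: add_pos_nonneg)
  have "(?Q1 + ?r * ?Q0) * (?Q1 * \<alpha> - ?P1) = ?Q1 * (\<alpha> * (?Q1 + ?r * ?Q0)) - ?P1 * (?Q1 + ?r * ?Q0)"
    by (simp add: algebra_simps)
  also have "\<dots> = ?r * (?Q1 * ?P0 - ?P1 * ?Q0)" unfolding cf_conv by (simp add: algebra_simps)
  also have "\<dots> = ?r * (-1)^n" by (simp add: cf_det)
  finally have e: "(?Q1 + ?r * ?Q0) * Lambda \<alpha> (Suc n) = ?r * (-1)^n" by (simp add: Lambda_def)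
  then have "Lambda \<alpha> (Suc n) = ?r * (-1)^n / (?Q1 + ?r * ?Q0)" using den
    by (simp add: field_simps)
  then have "\<bar>Lambda \<alpha> (Suc n)\<bar> = ?r / (?Q1 + ?r * ?Q0)" using den r
    by (simp add: abs_mult power_abs)
  also have "\<dots> = cn \<alpha> (Suc n) / ?Q1"
  proof -
    have Q1p: "0 < ?Q1" using Q1 by simp
    have "cn \<alpha> (Suc n) / ?Q1 = 1 / ((1/?r + ?Q0/?Q1) * ?Q1)"
      by (simp add: cn_def alpha_plus_def alpha_minus_def)
    also have "(1/?r + ?Q0/?Q1) * ?Q1 = (?Q1 + ?r*?Q0)/?r" using Q1p r by (simp add: field_simps)
    finally show ?thesis by simp
  qed
  finally show ?thesis .
qed

lemma cn_pos: "0 < cn \<alpha> (Suc n)" and cn_lt1: "cn \<alpha> (Suc n) < 1"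
proof -
  have "1 < 1 / cf_r \<alpha> n" by (rule cf_inv_gt1)
  moreover have "0 \<le> alpha_minus \<alpha> (Suc n)" by (simp add: alpha_minus_def)
  ultimately show "0 < cn \<alpha> (Suc n)" "cn \<alpha> (Suc n) < 1" by (auto simp: cn_def alpha_plus_def)
qed

end



lemma neg_pow_aux: fixes v :: real shows "(-1)^n * (- v) ^ (Suc n) = - (v ^ (Suc n))"
  by (induct n) (auto simp: algebra_simps)

lemma ln_trunc:
  fixes v :: real assumes v: "\<bar>v\<bar> \<le> 1/2"
  shows "\<bar>ln (1 - v) + (\<Sum>j=1..m. (1 / real j) * v^j)\<bar> \<le> 2 * \<bar>v\<bar>^(m+1)"
proof -
  define a where "a n = v^(Suc n) / real (Suc n)" for n
  have av: "\<bar>a n\<bar> \<le> \<bar>v\<bar>^(Suc n)" for n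
  proof -
    have "\<bar>a n\<bar> = \<bar>v\<bar>^(Suc n) / real (Suc n)" by (simp add: a_def abs_divide power_abs abs_mult)
    also have "\<dots> \<le> \<bar>v\<bar>^(Suc n) / 1" by (intro divide_left_mono) auto
    finally show ?thesis by simp
  qed
  have g: "summable (\<lambda>n. \<bar>v\<bar>^n)" using v by (intro summable_geometric) auto
  have g2: "summable (\<lambda>n. \<bar>v\<bar>^(m+1) * \<bar>v\<bar>^n)" using g by (rule summable_mult)
  have sa: "summable a"
  proof (rule summable_comparison_test[OF _ g])
    show "\<exists>N. \<forall>n\<ge>N. norm (a n) \<le> \<bar>v\<bar>^n"
      using av v by (auto intro!: exI[of _ 0] order_trans[OF av] mult_left_le_one_le)
  qed
  have t: "(-1)^n * (1 / real (n + 1)) * ((1 - v) - 1)^(Suc n) = - a n" for n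
  proof -
    have e1: "(1 - v) - 1 = - v" by simp
    have "(-1)^n * (1 / real (n + 1)) * ((1 - v) - 1)^(Suc n) = (1 / real (n + 1)) * ((-1)^n * (- v) ^ (Suc n))"
      unfolding e1 by (simp only: mult_ac)
    also have "\<dots> = (1 / real (n + 1)) * (- (v^(Suc n)))" by (simp only: neg_pow_aux)
    also have "\<dots> = - a n" by (simp add: a_def)
    finally show ?thesis .
  qed
  have "ln (1 - v) = (\<Sum>n. (-1)^n * (1 / real (n + 1)) * ((1 - v) - 1)^(Suc n))"
    using v by (intro ln_series) auto
  also have "\<dots> = (\<Sum>n. - a n)"
    by (rule arg_cong[where f=suminf], rule ext, rule t)
  also have "\<dots> = - suminf a" using sa by (rule suminf_minus)
  finally have l: "ln (1 - v) = - suminf a" .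
  have "suminf a = (\<Sum>n. a (n + m)) + (\<Sum>i<m. a i)" using sa by (rule suminf_split_initial_segment)
  moreover have "(\<Sum>i<m. a i) = (\<Sum>j=1..m. (1 / real j) * v^j)"
    by (induct m) (auto simp: a_def lessThan_Suc)
  ultimately have e: "ln (1 - v) + (\<Sum>j=1..m. (1 / real j) * v^j) = - (\<Sum>n. a (n + m))"
    using l by simp
  have pw: "\<bar>v\<bar>^(m+1) * \<bar>v\<bar>^n = \<bar>v\<bar>^(Suc (n+m))" for n
    by (simp add: power_add[symmetric] ac_simps)
  have av2: "\<bar>a (n + m)\<bar> \<le> \<bar>v\<bar>^(m+1) * \<bar>v\<bar>^n" for n
    unfolding pw by (rule av)
  have s1: "summable (\<lambda>n. \<bar>a (n + m)\<bar>)"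
  proof (rule summable_comparison_test[OF _ g2])
    show "\<exists>N. \<forall>n\<ge>N. norm \<bar>a (n + m)\<bar> \<le> \<bar>v\<bar>^(m+1) * \<bar>v\<bar>^n"
      using av2 by auto
  qed
  have "\<bar>\<Sum>n. a (n + m)\<bar> \<le> (\<Sum>n. \<bar>a (n + m)\<bar>)" using s1 by (rule summable_rabs)
  also have "\<dots> \<le> (\<Sum>n. \<bar>v\<bar>^(m+1) * \<bar>v\<bar>^n)"
    using s1 g2 av2 by (intro suminf_le) auto
  also have "\<dots> = \<bar>v\<bar>^(m+1) * (1 / (1 - \<bar>v\<bar>))"
    using v g by (subst suminf_mult) (auto simp: suminf_geometric)
  also have "\<dots> \<le> \<bar>v\<bar>^(m+1) * 2"
    using v by (intro mult_left_mono) (auto simp: field_simps)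
  finally show ?thesis using e by simp
qed

lemma sum_inv_sq:
  assumes "1 \<le> a" "a \<le> b"
  shows "(\<Sum>t\<in>{a<..b}. 1 / real t ^ 2) \<le> 1 / real a - 1 / real b"
  using assms(2)
proof (induction b rule: dec_induct)
  case base then show ?case by simp
next
  case (step b)
  have b: "1 \<le> real b" using assms step by simp
  have "1 / real (Suc b) ^ 2 \<le> 1 / (real b * real (Suc b))"
    using b by (intro divide_left_mono) (auto simp: power2_eq_square)
  also have "\<dots> = 1 / real b - 1 / real (Suc b)" using b by (simp add: field_simps)
  finally have "1 / real (Suc b) ^ 2 \<le> 1 / real b - 1 / real (Suc b)" .
  moreover have "{a<..Suc b} = insert (Suc b) {a<..b}" using step by auto
  ultimately show ?case using step by simp
qed

lemma sum_id_le: "(\<Sum>t=1..n. real t) \<le> real n ^ 2"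
proof -
  have "(\<Sum>t=1..n. real t) \<le> (\<Sum>t=1..n. real n)" by (intro sum_mono) auto
  then show ?thesis by (simp add: power2_eq_square)
qed

lemma sq_le_pow2: "n^2 \<le> (2::nat)^(n+1)"
proof (induction n rule: less_induct)
  case (less n)
  show ?case
  proof (cases "n \<le> 3")
    case True then have "n \<in> {0,1,2,3}" by auto
    then show ?thesis by auto
  next
    case False
    then obtain k where k: "n = Suc k" "3 \<le> k" by (cases n) auto
    have "n^2 = k^2 + 2*k + 1" using k by (simp add: power2_eq_square)
    also have "\<dots> \<le> 2 * k^2"
    proof -
      have "3 * k \<le> k * k" using k by (intro mult_le_mono1)
      then show ?thesis using k unfolding power2_eq_square by linarith
    qed
    also have "\<dots> \<le> 2 * 2^(k+1)" using less k by auto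
    finally show ?thesis using k by simp
  qed
qed

lemma abel_sum:
  fixes D g :: "nat \<Rightarrow> real" assumes "D 0 = 0"
  shows "(\<Sum>t=1..m. (D t - D (t - 1)) * g t) = D m * g m + (\<Sum>t=1..m-1. D t * (g t - g (t + 1)))"
proof (induction m)
  case 0 then show ?case using assms by simp
next
  case (Suc m)
  show ?case
  proof (cases m)
    case 0 then show ?thesis using assms by simp
  next
    case (Suc k)
    have "(\<Sum>t=1..Suc m. (D t - D (t - 1)) * g t) = (\<Sum>t=1..m. (D t - D (t - 1)) * g t) + (D (Suc m) - D m) * g (Suc m)"
      by (simp add: sum.cl_ivl_Suc)
    moreover have "(\<Sum>t=1..Suc m - 1. D t * (g t - g (t + 1))) = (\<Sum>t=1..m - 1. D t * (g t - g (t + 1))) + D m * (g m - g (m+1))"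
      using Suc by (simp add: sum.cl_ivl_Suc)
    ultimately show ?thesis using Suc.IH by (simp add: algebra_simps)
  qed
qed

lemma cot_diff:
  assumes "sin a \<noteq> 0" "sin b \<noteq> 0"
  shows "cot a - cot b = sin (b - a) / (sin a * sin b)"
  using assms by (simp add: cot_def sin_diff field_simps)




locale G =
  fixes q h :: nat and c :: real
  assumes q16: "16 \<le> q" and cop: "coprime h q" and c0: "0 < c" and c1: "c < 1"
begin

definition "gX t = frac (real t * real h / real q) - 1/2"
definition "gx t = pi * real t / real q"
definition "gd t = pi * c * gX t / real q"
definition "gf t = ln (sin (gx t - gd t) / sin (gx t))"
definition "gu t = gd t * cot (gx t)"
definition "gv t = c * gX t / real t"
definition "gM = (q - 1) div 2"
definition "gT = nat \<lfloor>sqrt (real q)\<rfloor>"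

lemma qpos: "0 < real q" using q16 by simp

lemma X_bound: "\<bar>gX t\<bar> \<le> 1/2"
  unfolding gX_def using frac_ge_0[of "real t * real h / real q"] frac_lt_1[of "real t * real h / real q"] by (auto simp: abs_if)

lemma cX_bound: "\<bar>c * gX t\<bar> \<le> c / 2"
  using X_bound[of t] c0 by (simp add: abs_mult mult_left_mono[of _ _ c, simplified])

lemma cX_lt: "\<bar>c * gX t\<bar> < 1/2"
  using cX_bound[of t] c1 by linarith

lemma X_sym:
  assumes "0 < t" "t < q"
  shows "gX (q - t) = - gX t"
proof -
  let ?y = "real t * real h / real q"
  have ny: "?y \<notin> \<int>"
  proof
    assume "?y \<in> \<int>"
    then obtain k where k: "?y = of_int k" by (auto elim: Ints_cases)
    then have "real t * real h = of_int k * real q" using qpos by (simp add: field_simps)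
    then have "int (t * h) = k * int q" by (metis of_int_eq_iff of_int_mult of_int_of_nat_eq of_nat_mult)
    then have "int q dvd int (t * h)" by simp
    then have "q dvd t * h" by presburger
    then have "q dvd t" using cop by (metis coprime_commute coprime_dvd_mult_left_iff)
    then show False using assms by (simp add: nat_dvd_not_less)
  qed
  have e: "real (q - t) * real h / real q = (- ?y) + of_int (int h)"
    using assms qpos by (simp add: of_nat_diff field_simps)
  have "frac (real (q - t) * real h / real q) = frac (- ?y)"
    unfolding e by (rule frac_add_of_int_right)
  also have "\<dots> = 1 - frac ?y" using ny by (simp add: frac_neg)
  finally show ?thesis unfolding gX_def by simp
qed

lemma sin_x_pos: assumes "0 < t" "t < q" shows "0 < sin (gx t)"
  unfolding gx_def using assms qpos by (intro sin_gt_zero) (auto simp: field_simps)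

lemma xd_eq: "gx t - gd t = pi * (real t - c * gX t) / real q"
  unfolding gx_def gd_def by (simp add: diff_divide_distrib right_diff_distrib mult.assoc)

lemma sin_xd_pos: assumes "0 < t" "t < q" shows "0 < sin (gx t - gd t)"
proof -
  have "real t - c * gX t > 0" "real t - c * gX t < real q"
    using cX_lt[of t] assms by (auto simp: abs_less_iff)
  then have a: "0 < (real t - c * gX t) / real q" "(real t - c * gX t) / real q < 1"
    using qpos by (auto simp: divide_simps)
  have "pi * ((real t - c * gX t) / real q) < pi * 1"
    using a(2) by (intro mult_strict_left_mono) auto
  moreover have "0 < pi * ((real t - c * gX t) / real q)" by (rule mult_pos_pos[OF pi_gt_zero a(1)])
  ultimately show ?thesis unfolding xd_eq by (intro sin_gt_zero) auto
qed

lemma f_sym: assumes "0 < t" "t < q" shows "gf (q - t) = gf t"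
proof -
  have "gx (q - t) = pi - gx t" unfolding gx_def using assms qpos by (simp add: of_nat_diff field_simps)
  moreover have "gd (q - t) = - gd t" unfolding gd_def using X_sym[OF assms] by simp
  ultimately have e1: "gx (q - t) - gd (q - t) = pi - (gx t - gd t)" by simp
  have e2: "gx (q - t) = pi - gx t" by fact
  have e3: "sin (gx (q - t) - gd (q - t)) = sin (gx t - gd t)" by (subst e1) (rule sin_pi_minus)
  have e4: "sin (gx (q - t)) = sin (gx t)" by (subst e2) (rule sin_pi_minus)
  show ?thesis unfolding gf_def e3 e4 ..
qed

lemma f_half: assumes "2 * t = q" shows "gf t = 0"
proof -
  have t: "0 < t" "t < q" using assms q16 by auto
  have "q - t = t" using assms by simp
  then have "gX t = 0" using X_sym[OF t] by simp
  then show ?thesis unfolding gf_def gd_def by simp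
qed

lemma sum_sym: "(\<Sum>t=1..q-1. gf t) = 2 * (\<Sum>t=1..gM. gf t)"
proof -
  let ?A = "{1..q-1}"
  have split: "(\<Sum>t\<in>?A. gf t) = (\<Sum>t\<in>?A. if 2*t < q then gf t else 0) + (\<Sum>t\<in>?A. if q < 2*t then gf t else 0)"
  proof (subst sum.distrib[symmetric], rule sum.cong)
    fix t assume "t \<in> ?A"
    show "gf t = (if 2*t < q then gf t else 0) + (if q < 2*t then gf t else 0)"
    proof (cases "2*t = q")
      case True then have "gf t = 0" by (rule f_half)
      then show ?thesis using True by simp
    qed auto
  qed simp
  have "(\<Sum>t\<in>?A. if q < 2*t then gf t else 0) = (\<Sum>t\<in>?A. if q < 2*(q - 1 + 1 - t) then gf (q - 1 + 1 - t) else 0)"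
    by (rule sum.atLeastAtMost_rev)
  also have "\<dots> = (\<Sum>t\<in>?A. if 2*t < q then gf t else 0)"
  proof (rule sum.cong)
    fix t assume t: "t \<in> ?A"
    then have "q - 1 + 1 - t = q - t" by auto
    moreover have "gf (q - t) = gf t" using t by (intro f_sym) auto
    ultimately show "(if q < 2*(q - 1 + 1 - t) then gf (q - 1 + 1 - t) else 0) = (if 2*t < q then gf t else 0)"
      using t by auto
  qed simp
  finally have "(\<Sum>t\<in>?A. gf t) = 2 * (\<Sum>t\<in>?A. if 2*t < q then gf t else 0)" using split by simp
  also have "(\<Sum>t\<in>?A. if 2*t < q then gf t else 0) = (\<Sum>t\<in>{t\<in>?A. 2*t < q}. gf t)"
    by (subst sum.inter_filter) auto
  also have "{t\<in>?A. 2*t < q} = {1..gM}" unfolding gM_def by auto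
  finally show ?thesis .
qed

end



lemma ln_lip:
  fixes a b :: real assumes "1/4 \<le> a" "1/4 \<le> b"
  shows "\<bar>ln a - ln b\<bar> \<le> 4 * \<bar>a - b\<bar>"
proof -
  have "ln a - ln b \<le> (a - b) / b" using ln_le_minus_one[of "a/b"] assms
    by (simp add: ln_div diff_divide_distrib)
  also have "\<dots> \<le> \<bar>a - b\<bar> * (1 / b)" using assms by (simp add: divide_right_mono)
  also have "\<dots> \<le> \<bar>a - b\<bar> * 4" using assms by (intro mult_left_mono) (auto simp: divide_simps)
  finally have 1: "ln a - ln b \<le> \<bar>a - b\<bar> * 4" .
  have "ln b - ln a \<le> (b - a) / a" using ln_le_minus_one[of "b/a"] assms
    by (simp add: ln_div diff_divide_distrib)
  also have "\<dots> \<le> \<bar>a - b\<bar> * (1 / a)" using assms by (simp add: divide_right_mono)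
  also have "\<dots> \<le> \<bar>a - b\<bar> * 4" using assms by (intro mult_left_mono) (auto simp: divide_simps)
  finally have 2: "ln b - ln a \<le> \<bar>a - b\<bar> * 4" .
  from 1 2 show ?thesis by (simp add: abs_le_iff mult.commute)
qed

context G begin

definition "ge t = sin (gx t - gd t) / sin (gx t) - (1 - gu t)"
definition "gW m t = (\<Sum>j=2..m. (1 / real j) * gv t ^ j)"

context
  fixes t assumes t1: "1 \<le> t" and tM: "t \<le> gM"
begin

lemma t2q: "2 * t < q" using t1 tM q16 unfolding gM_def by linarith
lemma tq: "0 < t" "t < q" using t1 t2q by auto

lemma x_pos: "0 < gx t" unfolding gx_def using t1 qpos by simp
lemma x_lt: "gx t < pi / 2"
proof -
  have "real t / real q < 1/2" using t2q qpos by (simp add: divide_simps)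
  then have "pi * (real t / real q) < pi * (1/2)" by (intro mult_strict_left_mono) auto
  then show ?thesis unfolding gx_def by simp
qed

lemma d_eq: "gd t = gx t * gv t"
  unfolding gd_def gx_def gv_def using tq by (simp add: field_simps)

lemma v_bound: "\<bar>gv t\<bar> \<le> 1 / (2 * real t)"
proof -
  have "\<bar>gv t\<bar> = \<bar>c * gX t\<bar> / real t" unfolding gv_def by (simp add: abs_divide)
  also have "\<dots> \<le> (1/2) / real t" using cX_lt[of t] tq by (intro divide_right_mono) auto
  finally show ?thesis by simp
qed

lemma v_half: "\<bar>gv t\<bar> \<le> 1/2"
proof -
  have "1 / (2 * real t) \<le> 1/2" using t1 by (simp add: divide_simps)
  then show ?thesis using v_bound by linarith
qed

lemma cot_nonneg: "0 \<le> cot (gx t)" using cot_gt_zero[OF x_pos x_lt] by simp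

lemma sinx_pos: "0 < sin (gx t)" using sin_x_pos[OF tq] .

lemma xcot_le: "gx t * cot (gx t) \<le> 1"
proof -
  have "gx t * cos (gx t) \<le> sin (gx t)" using x_pos x_lt by (intro x_cos_le_sin) auto
  then show ?thesis using sinx_pos by (simp add: cot_def divide_simps)
qed

lemma xcot_ge: "1 - gx t ^ 2 / 2 \<le> gx t * cot (gx t)"
proof -
  have c0: "0 \<le> cos (gx t)" using x_pos x_lt by (intro cos_ge_zero) auto
  have "sin (gx t) * cos (gx t) \<le> gx t * cos (gx t)"
    using sin_x_le_x[of "gx t"] x_pos c0 by (intro mult_right_mono) auto
  then have "cos (gx t) \<le> gx t * cot (gx t)" using sinx_pos by (simp add: cot_def divide_simps mult.commute)
  then show ?thesis using cos_lower[of "gx t"] by linarith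
qed

lemma u_eq: "gu t = gv t * (gx t * cot (gx t))"
  unfolding gu_def d_eq by simp

lemma u_bound: "\<bar>gu t\<bar> \<le> \<bar>gv t\<bar>"
proof -
  have nn: "0 \<le> gx t * cot (gx t)" using x_pos cot_nonneg by simp
  have "\<bar>gu t\<bar> = \<bar>gv t\<bar> * (gx t * cot (gx t))" unfolding u_eq
    by (simp only: abs_mult[of "gv t"] abs_of_nonneg[OF nn])
  also have "\<dots> \<le> \<bar>gv t\<bar> * 1" by (intro mult_left_mono xcot_le) auto
  finally show ?thesis by simp
qed

lemma uv_bound: "\<bar>gu t - gv t\<bar> \<le> pi^2 * real t / (4 * real q ^ 2)"
proof -
  have nn: "0 \<le> 1 - gx t * cot (gx t)" using xcot_le by simp
  have eq: "gu t - gv t = - (gv t * (1 - gx t * cot (gx t)))" unfolding u_eq by (simp add: algebra_simps)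
  have "\<bar>gu t - gv t\<bar> = \<bar>gv t\<bar> * (1 - gx t * cot (gx t))"
    unfolding eq by (simp only: abs_minus_cancel abs_mult[of "gv t"] abs_of_nonneg[OF nn])
  also have "\<dots> \<le> (1 / (2 * real t)) * (gx t ^ 2 / 2)"
    using xcot_ge xcot_le v_bound by (intro mult_mono) auto
  also have "\<dots> = pi^2 * real t / (4 * real q ^ 2)"
    unfolding gx_def using tq by (simp add: field_simps power2_eq_square)
  finally show ?thesis .
qed

lemma d_bound: "gd t ^ 2 \<le> 4 / real q ^ 2"
proof -
  have "\<bar>gd t\<bar> = pi * \<bar>c * gX t\<bar> / real q" unfolding gd_def using qpos by (simp add: abs_mult abs_divide)
  also have "\<dots> \<le> 2 / real q"
  proof -
    have "pi * \<bar>c * gX t\<bar> \<le> 4 * (1/2)" using cX_lt[of t] pi_less_4 by (intro mult_mono) auto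
    then show ?thesis using qpos by (simp add: divide_right_mono)
  qed
  finally have "\<bar>gd t\<bar> \<le> 2 / real q" .
  then have "\<bar>gd t\<bar>^2 \<le> (2 / real q)^2" by (intro power_mono) auto
  then show ?thesis by (simp add: power_divide)
qed

lemma ratio_eq: "sin (gx t - gd t) / sin (gx t) = 1 - gu t + ge t"
  unfolding ge_def by simp

lemma ge_formula: "ge t = (cos (gd t) - 1) - cot (gx t) * (sin (gd t) - gd t)"
  unfolding ge_def gu_def using sinx_pos by (simp add: sin_diff cot_def field_simps)

lemma e_bound: "\<bar>ge t\<bar> \<le> 4 / real q ^ 2"
proof -
  let ?d = "gd t"
  have "\<bar>cos ?d - 1\<bar> = - (cos ?d - 1)" using cos_le_one[of ?d] by (intro abs_of_nonpos) simp
  then have 1: "\<bar>cos ?d - 1\<bar> \<le> ?d^2 / 2" using cos_lower[of ?d] by linarith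
  have "\<bar>cot (gx t) * (sin ?d - ?d)\<bar> = cot (gx t) * \<bar>sin ?d - ?d\<bar>" using cot_nonneg by (simp add: abs_mult)
  also have "\<dots> \<le> cot (gx t) * (\<bar>?d\<bar>^3 / 6)" using cot_nonneg sin_minus_x_bound by (intro mult_left_mono) auto
  also have "\<dots> = \<bar>gu t\<bar> * ?d^2 / 6" unfolding gu_def using cot_nonneg
    by (simp add: abs_mult power2_eq_square power3_eq_cube)
  also have "\<dots> \<le> (1/2) * ?d^2 / 6" using u_bound v_half by (intro divide_right_mono mult_right_mono) auto
  finally have 2: "\<bar>cot (gx t) * (sin ?d - ?d)\<bar> \<le> ?d^2 / 12" by simp
  have "\<bar>ge t\<bar> \<le> ?d^2/2 + ?d^2/12" unfolding ge_formula using 1 2 by linarith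
  also have "\<dots> \<le> ?d^2" by simp
  finally show ?thesis using d_bound by linarith
qed

lemma q2_small: "4 / real q ^ 2 \<le> 1/64"
proof -
  have "16^2 \<le> real q ^ 2" using q16 by (intro power_mono) auto
  then show ?thesis by (simp add: divide_simps)
qed

lemma f_eq: "gf t = ln (1 - gu t + ge t)"
  unfolding gf_def ratio_eq ..

lemma f_u_bound: "\<bar>gf t + gu t\<bar> \<le> 16 / real q ^ 2 + 2 * gu t ^ 2"
proof -
  have u: "\<bar>gu t\<bar> \<le> 1/2" using u_bound v_half by linarith
  have e: "\<bar>ge t\<bar> \<le> 1/64" using e_bound q2_small by linarith
  have "\<bar>ln (1 - gu t + ge t) - ln (1 - gu t)\<bar> \<le> 4 * \<bar>(1 - gu t + ge t) - (1 - gu t)\<bar>"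
    using u e by (intro ln_lip) (auto simp: abs_le_iff)
  also have "\<dots> \<le> 16 / real q ^ 2" using e_bound by simp
  finally have 1: "\<bar>ln (1 - gu t + ge t) - ln (1 - gu t)\<bar> \<le> 16 / real q ^ 2" .
  have "\<bar>ln (1 + - gu t) - (- gu t)\<bar> \<le> 2 * (- gu t)^2"
    using u by (intro abs_ln_one_plus_x_minus_x_bound) auto
  then have 2: "\<bar>ln (1 - gu t) + gu t\<bar> \<le> 2 * gu t ^ 2" by simp
  show ?thesis unfolding f_eq using 1 2 by linarith
qed

lemma f_u_bound2: "\<bar>gf t + gu t\<bar> \<le> 16 / real q ^ 2 + 1 / (2 * real t ^ 2)"
proof -
  have "\<bar>gu t\<bar> \<le> 1 / (2 * real t)" using u_bound v_bound by linarith
  then have "\<bar>gu t\<bar>^2 \<le> (1 / (2 * real t))^2" by (intro power_mono) auto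
  then have "2 * gu t ^ 2 \<le> 1 / (2 * real t ^ 2)" by (simp add: power2_eq_square field_simps)
  then show ?thesis using f_u_bound by linarith
qed

lemma f_v_bound:
  assumes m: "1 \<le> m"
  shows "\<bar>gf t + gu t + gW m t\<bar> \<le> 5 * (pi^2 * real t / (4 * real q ^ 2)) + 16 / real q ^ 2 + (1/2)^m"
proof -
  have u: "\<bar>gu t\<bar> \<le> 1/2" using u_bound v_half by linarith
  have e: "\<bar>ge t\<bar> \<le> 1/64" using e_bound q2_small by linarith
  have "\<bar>ln (1 - gu t + ge t) - ln (1 - gv t)\<bar> \<le> 4 * \<bar>(1 - gu t + ge t) - (1 - gv t)\<bar>"
    using u e v_half by (intro ln_lip) (auto simp: abs_le_iff)
  also have "\<dots> \<le> 4 * \<bar>gu t - gv t\<bar> + 4 * \<bar>ge t\<bar>"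
  proof -
    have eq: "(1 - gu t + ge t) - (1 - gv t) = ge t - (gu t - gv t)" by simp
    have "\<bar>(1 - gu t + ge t) - (1 - gv t)\<bar> \<le> \<bar>ge t\<bar> + \<bar>gu t - gv t\<bar>"
      unfolding eq by (rule abs_triangle_ineq4)
    from mult_left_mono[OF this, of 4] show ?thesis by (simp add: algebra_simps)
  qed
  finally have 1: "\<bar>gf t - ln (1 - gv t)\<bar> \<le> 4 * \<bar>gu t - gv t\<bar> + 4 * \<bar>ge t\<bar>" unfolding f_eq .
  have 2: "\<bar>ln (1 - gv t) + (\<Sum>j=1..m. (1 / real j) * gv t ^ j)\<bar> \<le> 2 * \<bar>gv t\<bar>^(m+1)"
    using v_half by (rule ln_trunc)
  have "\<bar>gv t\<bar>^(m+1) \<le> (1/2)^(m+1)" using v_half by (intro power_mono) auto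
  then have 3: "2 * \<bar>gv t\<bar>^(m+1) \<le> (1/2)^m" by simp
  have s: "(\<Sum>j=1..m. (1 / real j) * gv t ^ j) = gv t + gW m t"
  proof -
    have "{1..m} = insert 1 {2..m}" using m by auto
    then show ?thesis unfolding gW_def by simp
  qed
  have "\<bar>gf t + gu t + gW m t\<bar> \<le> \<bar>gf t - ln (1 - gv t)\<bar> + \<bar>ln (1 - gv t) + (\<Sum>j=1..m. (1 / real j) * gv t ^ j)\<bar> + \<bar>gu t - gv t\<bar>"
    unfolding s by linarith
  then show ?thesis using 1 2 3 uv_bound e_bound by linarith
qed

end
end



context G begin

definition "gD t = (\<Sum>s=1..t. gX s)"
definition "gS = (\<Sum>t=1..gM-1. gD t / (sin (gx t) * sin (gx (t+1))))"

lemma M_ge: "q \<le> 2 * gM + 2" and M_le: "2 * gM + 1 \<le> q"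
  unfolding gM_def using q16 by arith+

lemma T_props: "4 \<le> gT" "real gT ^ 2 \<le> real q" "gT \<le> gM"
proof -
  have s4: "4 \<le> sqrt (real q)" using q16 by (simp add: real_le_rsqrt)
  then show t4: "4 \<le> gT" unfolding gT_def by (simp add: le_nat_iff le_floor_iff)
  have "real gT \<le> sqrt (real q)" unfolding gT_def using s4 by simp
  then have "real gT ^ 2 \<le> sqrt (real q) ^ 2" by (intro power_mono) auto
  then show tq: "real gT ^ 2 \<le> real q" by simp
  have "4 * gT \<le> gT * gT" using t4 by (intro mult_le_mono1)
  moreover have "gT * gT \<le> q" using tq by (simp add: power2_eq_square flip: of_nat_mult)
  ultimately show "gT \<le> gM" using M_ge by linarith
qed

lemma T_pos: "0 < real gT" using T_props(1) by simp

lemma q_inv_le: "1 / real q \<le> 1 / real gT"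
proof -
  have "real gT \<le> real gT ^ 2" using T_props(1) by (simp add: power2_eq_square)
  then have "real gT \<le> real q" using T_props(2) by linarith
  then show ?thesis using T_pos by (simp add: divide_simps)
qed

lemma D_bound: "\<bar>gD t\<bar> \<le> real t / 2"
proof -
  have "\<bar>gD t\<bar> \<le> (\<Sum>s=1..t. \<bar>gX s\<bar>)" unfolding gD_def by (rule sum_abs)
  also have "\<dots> \<le> (\<Sum>s=1..t. 1/2)" by (intro sum_mono X_bound)
  finally show ?thesis by simp
qed

lemma X_eq_D: "1 \<le> t \<Longrightarrow> gX t = gD t - gD (t - 1)"
  unfolding gD_def by (cases t) (auto simp: sum.cl_ivl_Suc)

lemma u_sum: "(\<Sum>t=1..gM. gu t) = pi * c / real q * (gD gM * cot (gx gM) + sin (pi / real q) * gS)"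
proof -
  have "(\<Sum>t=1..gM. gu t) = (\<Sum>t=1..gM. pi * c / real q * ((gD t - gD (t - 1)) * cot (gx t)))"
  proof (intro sum.cong refl)
    fix t assume "t \<in> {1..gM}"
    then have e: "gX t = gD t - gD (t - 1)" by (intro X_eq_D) auto
    show "gu t = pi * c / real q * ((gD t - gD (t - 1)) * cot (gx t))"
      unfolding gu_def gd_def e[symmetric] by simp
  qed
  also have "\<dots> = pi * c / real q * (\<Sum>t=1..gM. (gD t - gD (t - 1)) * cot (gx t))"
    by (simp add: sum_distrib_left)
  also have "(\<Sum>t=1..gM. (gD t - gD (t - 1)) * cot (gx t)) = gD gM * cot (gx gM) + (\<Sum>t=1..gM-1. gD t * (cot (gx t) - cot (gx (t + 1))))"
    by (rule abel_sum) (simp add: gD_def)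
  also have "(\<Sum>t=1..gM-1. gD t * (cot (gx t) - cot (gx (t + 1)))) = sin (pi / real q) * gS"
    unfolding gS_def sum_distrib_left
  proof (intro sum.cong refl)
    fix t assume t: "t \<in> {1..gM-1}"
    then have a: "0 < t" "t < q" and b: "0 < t + 1" "t + 1 < q" using M_le by auto
    have "cot (gx t) - cot (gx (t + 1)) = sin (gx (t+1) - gx t) / (sin (gx t) * sin (gx (t+1)))"
      using sin_x_pos[OF a] sin_x_pos[OF b] by (intro cot_diff) auto
    moreover have "gx (t+1) - gx t = pi / real q" unfolding gx_def by (simp add: distrib_left add_divide_distrib)
    ultimately show "gD t * (cot (gx t) - cot (gx (t + 1))) = sin (pi / real q) * (gD t / (sin (gx t) * sin (gx (t + 1))))"
      by simp
  qed
  finally show ?thesis .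
qed

lemma cotM_bound: "0 \<le> cot (gx gM)" "cot (gx gM) \<le> 24 / real q"
proof -
  have M1: "1 \<le> gM" using M_ge q16 by linarith
  have xp: "0 < gx gM" using x_pos[OF M1 order_refl] .
  have xl: "gx gM < pi/2" using x_lt[OF M1 order_refl] .
  show "0 \<le> cot (gx gM)" using cot_nonneg[OF M1 order_refl] .
  have "pi / 2 - gx gM = pi * (real q - 2 * real gM) / (2 * real q)"
    unfolding gx_def using qpos by (simp add: field_simps)
  also have "\<dots> \<le> pi * 2 / (2 * real q)"
    using M_ge qpos by (intro divide_right_mono mult_left_mono) auto
  also have "\<dots> \<le> 4 / real q" using pi_less_4 qpos by (simp add: divide_simps)
  finally have h1: "pi / 2 - gx gM \<le> 4 / real q" .
  have "cos (gx gM) = sin (pi/2 - gx gM)" by (simp add: sin_cos_eq)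
  also have "\<dots> \<le> pi/2 - gx gM" using xl by (intro sin_x_le_x) auto
  finally have c: "cos (gx gM) \<le> 4 / real q" using h1 by linarith
  have "pi / 4 \<le> gx gM"
  proof -
    have "real q \<le> 4 * real gM" using M_ge q16 by linarith
    then have "pi * real q \<le> pi * (4 * real gM)" by (intro mult_left_mono) auto
    then show ?thesis unfolding gx_def using qpos by (simp add: divide_simps)
  qed
  then have "1/2 \<le> gx gM" using pi_ge_two by linarith
  moreover have "gx gM \<le> 2" using xl pi_less_4 by linarith
  ultimately have s: "1/6 \<le> sin (gx gM)" using sin_ge_third[of "gx gM"] by linarith
  have "cot (gx gM) = cos (gx gM) / sin (gx gM)" by (simp add: cot_def)
  also have "\<dots> \<le> (4 / real q) / (1/6)"
    using c s cot_nonneg[OF M1 order_refl] xp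
    by (intro frac_le) (auto simp: cos_ge_zero)
  finally show "cot (gx gM) \<le> 24 / real q" by simp
qed

lemma sin_lower_t: assumes "1 \<le> t" "t \<le> gM" shows "2 * real t / (3 * real q) \<le> sin (gx t)"
proof -
  have "gx t \<le> 2" using x_lt[OF assms] pi_less_4 by linarith
  then have "gx t / 3 \<le> sin (gx t)" using x_pos[OF assms] by (intro sin_ge_third) auto
  moreover have "2 * real t / (3 * real q) \<le> gx t / 3"
    unfolding gx_def using pi_ge_two qpos by (simp add: divide_simps mult_right_mono)
  ultimately show ?thesis by linarith
qed

lemma S_bound: "\<bar>gS\<bar> \<le> real q ^ 3"
proof -
  have "\<bar>gS\<bar> \<le> (\<Sum>t=1..gM-1. \<bar>gD t / (sin (gx t) * sin (gx (t+1)))\<bar>)" unfolding gS_def by (rule sum_abs)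
  also have "\<dots> \<le> (\<Sum>t=1..gM-1. 2 * real q ^ 2)"
  proof (intro sum_mono)
    fix t assume t: "t \<in> {1..gM-1}"
    then have t1: "1 \<le> t" "t \<le> gM" and t2: "1 \<le> t+1" "t+1 \<le> gM" by auto
    have s1: "2 * real t / (3 * real q) \<le> sin (gx t)" by (rule sin_lower_t[OF t1])
    have "2 * real (t+1) / (3 * real q) \<le> sin (gx (t+1))" by (rule sin_lower_t[OF t2])
    moreover have "2 * real t / (3 * real q) \<le> 2 * real (t+1) / (3 * real q)" using qpos by (simp add: divide_right_mono)
    ultimately have s2: "2 * real t / (3 * real q) \<le> sin (gx (t+1))" by linarith
    have p0: "0 < 2 * real t / (3 * real q)" using t1 qpos by simp
    have prod: "(2 * real t / (3 * real q)) * (2 * real t / (3 * real q)) \<le> sin (gx t) * sin (gx (t+1))"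
      using s1 s2 p0 by (intro mult_mono) auto
    have pp: "0 < (2 * real t / (3 * real q)) * (2 * real t / (3 * real q))" by (rule mult_pos_pos[OF p0 p0])
    have "\<bar>gD t / (sin (gx t) * sin (gx (t+1)))\<bar> = \<bar>gD t\<bar> / (sin (gx t) * sin (gx (t+1)))"
      using pp prod by (simp add: abs_divide)
    also have "\<dots> \<le> (real t / 2) / ((2 * real t / (3 * real q)) * (2 * real t / (3 * real q)))"
      using D_bound[of t] prod pp by (intro frac_le) auto
    also have "\<dots> = 9 * real q ^ 2 / (8 * real t)" using t1 qpos by (simp add: field_simps power2_eq_square)
    also have "\<dots> \<le> 9 * real q ^ 2 / (8 * 1)" using t1 by (intro divide_left_mono) auto
    also have "\<dots> \<le> 2 * real q ^ 2" by simp
    finally show "\<bar>gD t / (sin (gx t) * sin (gx (t+1)))\<bar> \<le> 2 * real q ^ 2" .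
  qed
  also have "\<dots> = real (gM - 1) * (2 * real q ^ 2)" by simp
  also have "\<dots> \<le> real q / 2 * (2 * real q ^ 2)"
    using M_le by (intro mult_right_mono) auto
  also have "\<dots> = real q ^ 3" by (simp add: power2_eq_square power3_eq_cube)
  finally show ?thesis .
qed

end



context G begin

lemma part1: "\<bar>\<Sum>t=1..gT. gf t + gu t + gW gT t\<bar> \<le> 38 / real gT"
proof -
  let ?Q = "real q" and ?T = "real gT"
  have "\<bar>\<Sum>t=1..gT. gf t + gu t + gW gT t\<bar> \<le> (\<Sum>t=1..gT. \<bar>gf t + gu t + gW gT t\<bar>)" by (rule sum_abs)
  also have "\<dots> \<le> (\<Sum>t=1..gT. 5 * (pi^2 / (4 * ?Q ^ 2)) * real t + 16 / ?Q ^ 2 + (1/2)^gT)"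
  proof (intro sum_mono)
    fix t assume t: "t \<in> {1..gT}"
    then have "1 \<le> t" "t \<le> gM" using T_props(3) by auto
    from f_v_bound[OF this, of gT] T_props(1)
    show "\<bar>gf t + gu t + gW gT t\<bar> \<le> 5 * (pi^2 / (4 * ?Q ^ 2)) * real t + 16 / ?Q ^ 2 + (1/2)^gT" by simp
  qed
  also have "\<dots> = 5 * (pi^2 / (4 * ?Q ^ 2)) * (\<Sum>t=1..gT. real t) + ?T * (16 / ?Q ^ 2) + ?T * (1/2)^gT"
    by (simp add: sum.distrib sum_distrib_left)
  also have "\<dots> \<le> 5 * (pi^2 / (4 * ?Q ^ 2)) * ?T^2 + ?T * (16 / ?Q ^ 2) + ?T * (1/2)^gT"
    using sum_id_le[of gT] by (intro add_mono mult_left_mono) auto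
  also have "\<dots> \<le> 20 / ?T + 16 / ?T + 2 / ?T"
  proof (intro add_mono)
    have qp: "0 < ?Q" by (rule qpos)
    have "5 * (pi^2 / (4 * ?Q ^ 2)) * ?T^2 \<le> 5 * (16 / (4 * ?Q ^ 2)) * ?Q"
    proof (intro mult_mono)
      show "pi^2 / (4 * ?Q ^ 2) \<le> 16 / (4 * ?Q ^ 2)"
      proof (intro divide_right_mono)
        have "pi^2 \<le> 4^2" using pi_less_4 pi_gt_zero by (intro power_mono) auto
        then show "pi^2 \<le> 16" by simp
      qed simp
    qed (use T_props(2) in auto)
    also have "\<dots> = 20 / ?Q" using qp by (simp add: field_simps power2_eq_square)
    also have "\<dots> \<le> 20 / ?T" using q_inv_le by (simp add: divide_simps) (use q_inv_le T_pos qp in \<open>simp add: divide_simps\<close>)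
    finally show "5 * (pi^2 / (4 * ?Q ^ 2)) * ?T^2 \<le> 20 / ?T" .
    have TQ: "?T \<le> ?Q" using T_props(1,2) by (smt (verit) T_pos of_nat_le_iff power2_eq_square mult_le_cancel_left1 of_nat_1 of_nat_le_iff one_le_numeral order_trans)
    have "?T * (16 / ?Q ^ 2) \<le> ?Q * (16 / ?Q^2)" using TQ by (intro mult_right_mono) auto
    also have "\<dots> = 16 / ?Q" using qp by (simp add: power2_eq_square)
    also have "\<dots> \<le> 16 / ?T" using TQ T_pos by (intro divide_left_mono) auto
    finally show "?T * (16 / ?Q ^ 2) \<le> 16 / ?T" .
    have "gT^2 \<le> (2::nat)^(gT+1)" by (rule sq_le_pow2)
    then have "?T^2 \<le> 2 * 2^gT" by (simp flip: of_nat_power) (metis of_nat_le_iff of_nat_mult of_nat_numeral of_nat_power power_Suc)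
    then show "?T * (1/2)^gT \<le> 2 / ?T" using T_pos by (simp add: divide_simps power2_eq_square power_one_over)
  qed
  finally show ?thesis by simp
qed

end



context G begin

lemma TQ: "real gT \<le> real q"
proof -
  have "real gT \<le> real gT ^ 2" using T_props(1) by (simp add: power2_eq_square)
  then show ?thesis using T_props(2) by linarith
qed

lemma part2: "\<bar>\<Sum>t\<in>{gT<..gM}. gf t + gu t\<bar> \<le> 17 / real gT"
proof -
  let ?Q = "real q" and ?T = "real gT"
  have "\<bar>\<Sum>t\<in>{gT<..gM}. gf t + gu t\<bar> \<le> (\<Sum>t\<in>{gT<..gM}. \<bar>gf t + gu t\<bar>)" by (rule sum_abs)
  also have "\<dots> \<le> (\<Sum>t\<in>{gT<..gM}. 16 / ?Q ^ 2 + (1/2) * (1 / real t ^ 2))"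
  proof (intro sum_mono)
    fix t assume t: "t \<in> {gT<..gM}"
    then have "1 \<le> t" "t \<le> gM" using T_props(1) by auto
    from f_u_bound2[OF this] show "\<bar>gf t + gu t\<bar> \<le> 16 / ?Q ^ 2 + (1/2) * (1 / real t ^ 2)" by simp
  qed
  also have "\<dots> = real (gM - gT) * (16 / ?Q ^ 2) + (1/2) * (\<Sum>t\<in>{gT<..gM}. 1 / real t ^ 2)"
    by (simp add: sum.distrib sum_distrib_left)
  also have "\<dots> \<le> ?Q * (16 / ?Q ^ 2) + (1/2) * (1 / ?T)"
  proof (intro add_mono mult_right_mono mult_left_mono)
    show "real (gM - gT) \<le> ?Q" using M_le by simp
    have "(\<Sum>t\<in>{gT<..gM}. 1 / real t ^ 2) \<le> 1 / ?T - 1 / real gM"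
      using T_props by (intro sum_inv_sq) auto
    also have "\<dots> \<le> 1 / ?T" by simp
    finally show "(\<Sum>t\<in>{gT<..gM}. 1 / real t ^ 2) \<le> 1 / ?T" .
  qed auto
  also have "\<dots> = 16 / ?Q + (1/2) * (1 / ?T)" using qpos by (simp add: power2_eq_square)
  also have "\<dots> \<le> 16 / ?T + (1/2) * (1 / ?T)" using TQ T_pos by (intro add_mono divide_left_mono) auto
  also have "\<dots> \<le> 17 / ?T" using T_pos by (simp add: divide_simps)
  finally show ?thesis .
qed

end



lemma abs3: fixes a b d :: real shows "\<bar>a - b - d\<bar> \<le> \<bar>a\<bar> + \<bar>b\<bar> + \<bar>d\<bar>"
  by (simp add: abs_if)

context G begin

lemma split_sum: "(\<Sum>t=1..gM. g t) = (\<Sum>t=1..gT. g t) + (\<Sum>t\<in>{gT<..gM}. g t)"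
proof -
  have "{1..gM} = {1..gT} \<union> {gT<..gM}" using T_props(3) T_props(1) by auto
  then show ?thesis by (simp add: sum.union_disjoint ivl_disj_int)
qed

lemma coef_bound: "\<bar>2 * pi * c / real q\<bar> \<le> 8 / real q"
proof -
  have "2 * pi * c \<le> 2 * 4 * 1" using pi_less_4 c0 c1 by (intro mult_mono) auto
  then show ?thesis using c0 qpos by (simp add: abs_divide abs_mult divide_right_mono)
qed

lemma B1: "\<bar>2 * pi * c / real q * (gD gM * cot (gx gM))\<bar> \<le> 48 / real q"
proof -
  have d: "\<bar>gD gM\<bar> \<le> real q / 4" using D_bound[of gM] M_le by simp
  have "\<bar>gD gM * cot (gx gM)\<bar> = \<bar>gD gM\<bar> * cot (gx gM)" using cotM_bound by (simp add: abs_mult)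
  also have "\<dots> \<le> (real q / 4) * (24 / real q)" using d cotM_bound by (intro mult_mono) auto
  also have "\<dots> = 6" using qpos by simp
  finally have e: "\<bar>gD gM * cot (gx gM)\<bar> \<le> 6" .
  have "\<bar>2 * pi * c / real q * (gD gM * cot (gx gM))\<bar> = \<bar>2 * pi * c / real q\<bar> * \<bar>gD gM * cot (gx gM)\<bar>"
    by (rule abs_mult)
  also have "\<dots> \<le> (8 / real q) * 6" using coef_bound e by (intro mult_mono) auto
  finally show ?thesis by simp
qed

lemma B2: "\<bar>2 * pi * c / real q * ((sin (pi / real q) - pi / real q) * gS)\<bar> \<le> 88 / real q"
proof -
  have "\<bar>sin (pi / real q) - pi / real q\<bar> \<le> \<bar>pi / real q\<bar>^3 / 6" by (rule sin_minus_x_bound)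
  also have "\<dots> \<le> (4 / real q)^3 / 6"
    using pi_less_4 qpos by (intro divide_right_mono power_mono) (auto simp: divide_right_mono)
  also have "\<dots> = (64 / 6) / real q ^ 3" by (simp add: power_divide)
  finally have s: "\<bar>sin (pi / real q) - pi / real q\<bar> \<le> (64 / 6) / real q ^ 3" .
  have "\<bar>(sin (pi / real q) - pi / real q) * gS\<bar> \<le> ((64 / 6) / real q ^ 3) * real q ^ 3"
    unfolding abs_mult using s S_bound by (intro mult_mono) auto
  also have "\<dots> = 64 / 6" using qpos by simp
  finally have e: "\<bar>(sin (pi / real q) - pi / real q) * gS\<bar> \<le> 64 / 6" .
  have "\<bar>2 * pi * c / real q * ((sin (pi / real q) - pi / real q) * gS)\<bar> \<le> (8 / real q) * (64 / 6)"
    unfolding abs_mult[of "2 * pi * c / real q"] using coef_bound e by (intro mult_mono) auto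
  also have "\<dots> \<le> 88 / real q" using qpos by (simp add: divide_simps)
  finally show ?thesis .
qed

lemma main_loc:
  "\<bar>(\<Sum>t=1..q-1. gf t) - (- 2 * pi\<^sup>2 * c / real q ^ 2 * gS - 2 * (\<Sum>t=1..gT. gW gT t))\<bar> \<le> 1000 / real gT"
proof -
  let ?P1 = "\<Sum>t=1..gT. gf t + gu t + gW gT t" and ?P2 = "\<Sum>t\<in>{gT<..gM}. gf t + gu t"
  let ?U = "\<Sum>t=1..gM. gu t" and ?W = "\<Sum>t=1..gT. gW gT t"
  have "?P1 + ?P2 = (\<Sum>t=1..gT. gf t) + (\<Sum>t=1..gT. gu t) + ?W + (\<Sum>t\<in>{gT<..gM}. gf t) + (\<Sum>t\<in>{gT<..gM}. gu t)"
    by (simp add: sum.distrib)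
  also have "\<dots> = (\<Sum>t=1..gM. gf t) + ?U + ?W" using split_sum[of gf] split_sum[of gu] by linarith
  finally have fs: "(\<Sum>t=1..gM. gf t) = ?P1 + ?P2 - ?U - ?W" by simp
  have "(\<Sum>t=1..q-1. gf t) - (- 2 * pi\<^sup>2 * c / real q ^ 2 * gS - 2 * ?W)
     = 2 * (?P1 + ?P2) - 2 * ?U + 2 * pi\<^sup>2 * c / real q ^ 2 * gS"
    unfolding sum_sym fs by (simp add: algebra_simps)
  also have "\<dots> = 2 * (?P1 + ?P2) - 2 * pi * c / real q * (gD gM * cot (gx gM))
       - 2 * pi * c / real q * ((sin (pi / real q) - pi / real q) * gS)"
    unfolding u_sum using qpos by (simp add: algebra_simps power2_eq_square)
  finally have eq: "(\<Sum>t=1..q-1. gf t) - (- 2 * pi\<^sup>2 * c / real q ^ 2 * gS - 2 * ?W) = \<dots>" .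
  have a1: "\<bar>2 * (?P1 + ?P2)\<bar> \<le> 2 * (38 / real gT + 17 / real gT)"
    using part1 part2 by (simp add: abs_mult)
  have q1: "48 / real q \<le> 48 / real gT" and q2: "88 / real q \<le> 88 / real gT"
    using TQ T_pos by (intro divide_left_mono; simp)+
  have "\<bar>2 * (?P1 + ?P2)\<bar> + \<bar>2 * pi * c / real q * (gD gM * cot (gx gM))\<bar>
     + \<bar>2 * pi * c / real q * ((sin (pi / real q) - pi / real q) * gS)\<bar>
     \<le> 2 * (38 / real gT + 17 / real gT) + 48 / real gT + 88 / real gT"
    by (intro add_mono a1 order_trans[OF B1 q1] order_trans[OF B2 q2])
  then have "\<bar>(\<Sum>t=1..q-1. gf t) - (- 2 * pi\<^sup>2 * c / real q ^ 2 * gS - 2 * ?W)\<bar>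
     \<le> 2 * (38 / real gT + 17 / real gT) + 48 / real gT + 88 / real gT"
    unfolding eq by (rule order_trans[OF abs3])
  also have "\<dots> \<le> 1000 / real gT" using T_pos by (simp add: divide_simps)
  finally show ?thesis .
qed

end



theorem lemma4p4:
  fixes \<alpha> :: real
  assumes "0 < \<alpha>" and "\<alpha> < 1" and "\<alpha> \<notin> \<rat>"
  shows "\<exists>C. \<exists>N. \<forall>n \<ge> N.
    \<bar>ln (Bn \<alpha> n)
      - ( - 2 * pi\<^sup>2 * cn \<alpha> n / real (cf_q \<alpha> n) ^ 2
            * (\<Sum>t = 1..Mn \<alpha> n - 1. Dt t (alpha_minus \<alpha> n)
                 / (sin (pi * real t / real (cf_q \<alpha> n)) * sin (pi * real (t + 1) / real (cf_q \<alpha> n))))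
          - 2 * (\<Sum>t = 1..taun \<alpha> n. \<Sum>j = 2..taun \<alpha> n.
                   (1 / real j) * (cn \<alpha> n * xi \<alpha> n t / real t) ^ j))\<bar>
    \<le> C / real (taun \<alpha> n)"
proof (intro exI allI impI)
  fix n :: nat assume n: "20 \<le> n"
  then obtain m where m: "n = Suc m" by (cases n) auto
  have q16: "16 \<le> cf_q \<alpha> n" using cf_q_ge[OF assms, of n] n by linarith
  have cop: "coprime (cf_q \<alpha> m) (cf_q \<alpha> n)" unfolding m by (rule cf_coprime[OF assms])
  have c0: "0 < cn \<alpha> n" and c1: "cn \<alpha> n < 1" unfolding m using cn_pos[OF assms] cn_lt1[OF assms] by auto
  interpret G "cf_q \<alpha> n" "cf_q \<alpha> m" "cn \<alpha> n"
    using q16 cop c0 c1 by unfold_locales auto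
  have lam: "\<bar>Lambda \<alpha> n\<bar> = cn \<alpha> n / real (cf_q \<alpha> n)" unfolding m by (rule cf_Lambda[OF assms])
  have nm: "n - 1 = m" using m by simp
  have xi_eq: "xi \<alpha> n t = gX t" for t unfolding xi_def gX_def nm ..
  have fac: "snt \<alpha> n t / (2 * sin (pi * real t / real (cf_q \<alpha> n))) = sin (gx t - gd t) / sin (gx t)" for t
  proof -
    have "pi * (real t / real (cf_q \<alpha> n) - \<bar>Lambda \<alpha> n\<bar> * xi \<alpha> n t) = gx t - gd t"
      unfolding lam xi_eq gx_def gd_def by (simp add: algebra_simps)
    then show ?thesis unfolding snt_def gx_def by simp
  qed
  have pos: "0 < sin (gx t - gd t) / sin (gx t)" if "t \<in> {1..cf_q \<alpha> n - 1}" for t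
    using that sin_xd_pos[of t] sin_x_pos[of t] by (intro divide_pos_pos) auto
  have eB: "ln (Bn \<alpha> n) = (\<Sum>t=1..cf_q \<alpha> n - 1. gf t)"
  proof -
    have "Bn \<alpha> n = \<bar>\<Prod>t=1..cf_q \<alpha> n - 1. sin (gx t - gd t) / sin (gx t)\<bar>"
      unfolding Bn_def fac ..
    also have "\<dots> = (\<Prod>t=1..cf_q \<alpha> n - 1. sin (gx t - gd t) / sin (gx t))"
      using pos by (intro abs_of_pos prod_pos) auto
    finally have "ln (Bn \<alpha> n) = ln (\<Prod>t=1..cf_q \<alpha> n - 1. sin (gx t - gd t) / sin (gx t))" by simp
    also have "\<dots> = (\<Sum>t=1..cf_q \<alpha> n - 1. ln (sin (gx t - gd t) / sin (gx t)))"
    proof (rule ln_prod)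
      fix t assume "t \<in> {1..cf_q \<alpha> n - 1}"
      from pos[OF this] show "sin (gx t - gd t) / sin (gx t) \<noteq> 0" by linarith
    qed simp
    finally show ?thesis unfolding gf_def .
  qed
  have eD: "Dt t (alpha_minus \<alpha> n) = gD t" for t
    unfolding Dt_def gD_def gX_def alpha_minus_def nm by (intro sum.cong refl) (simp add: field_simps)
  have eS: "(\<Sum>t = 1..Mn \<alpha> n - 1. Dt t (alpha_minus \<alpha> n)
                 / (sin (pi * real t / real (cf_q \<alpha> n)) * sin (pi * real (t + 1) / real (cf_q \<alpha> n)))) = gS"
    unfolding gS_def eD Mn_def gM_def gx_def ..
  have eW: "(\<Sum>t = 1..taun \<alpha> n. \<Sum>j = 2..taun \<alpha> n. (1 / real j) * (cn \<alpha> n * xi \<alpha> n t / real t) ^ j)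
      = (\<Sum>t=1..gT. gW gT t)"
    unfolding gW_def gv_def taun_def gT_def xi_eq ..
  show "\<bar>ln (Bn \<alpha> n)
      - ( - 2 * pi\<^sup>2 * cn \<alpha> n / real (cf_q \<alpha> n) ^ 2
            * (\<Sum>t = 1..Mn \<alpha> n - 1. Dt t (alpha_minus \<alpha> n)
                 / (sin (pi * real t / real (cf_q \<alpha> n)) * sin (pi * real (t + 1) / real (cf_q \<alpha> n))))
          - 2 * (\<Sum>t = 1..taun \<alpha> n. \<Sum>j = 2..taun \<alpha> n.
                   (1 / real j) * (cn \<alpha> n * xi \<alpha> n t / real t) ^ j))\<bar>
    \<le> 1000 / real (taun \<alpha> n)"
    unfolding eB eS eW using main_loc unfolding taun_def gT_def by simp
qed


end
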